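(* In the simplified FaRMv2 protocol described in the context, every transaction $T$ (committed or aborted) works on a consistent snapshot of object values taken at its read timestamp $rts$: for every object that $T$ successfully reads, the version it reads is the latest version of that object ever written with timestamp at most $rts$, and the global time $rts$ occurs during the execution of $T$ (between its start and the completion of its read-timestamp acquisition).
   Context: Global time means the time at a distinguished clock master. Each machine has a local clock whose rate differs from that of global time by a relative factor of at most a known drift bound $\epsilon$. The function TIME() returns an interval $[L,U]$ such that the global time at the moment of the call lies in $[L,U]$. The function GET\_TS is: $[L,U] \gets \mathrm{TIME}()$; sleep for $(U-L)(1+\epsilon)$ units of local time; return $U$. The data consists of objects, each having a lock bit and a set of versions, each version tagged with a timestamp (the write timestamp of the transaction that wrote it). ReadAtTs$(R,ts)$: if $R$ is locked return NULL; otherwise return the version of $R$ with the highest timestamp $\le ts$, or NULL if none is available. LockAtTs$(R,ts)$: if $R$ is locked or $R$ has timestamp $\ge ts$ return NULL; otherwise lock $R$. A transaction with read set RSet and write set WSet executes ExecuteAndCommit(RSet, WSet): $rts \gets$ GET\_TS; for each $R\in$ RSet, if ReadAtTs$(R,rts)$ returns NULL then abort; if WSet is empty, commit (read-only transaction); otherwise for each $W\in$ WSet, if LockAtTs$(W,rts)$ returns NULL then abort; then $wts \gets$ GET\_TS (performed while holding the locks); then for each $R \in$ RSet $\setminus$ WSet, if $R$ is locked or $R$ has timestamp $> rts$, abort (validation failure); then install for each object in WSet a new version with timestamp $wts$, unlock all objects, and commit. Here $rts$ is the transaction's read timestamp and $wts$ its write timestamp. *)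

theory Defs
  imports Main "HOL.Real"
begin

(* Simplified FaRMv2 protocol as a timed interleaving transition system.
   Global time = real number 'now'. Versions are identified by
   (writer, timestamp); writer None = the initial version. *)

datatype phase = NotStarted | RtsWait | Reading | Locking | WtsWait
               | Validating | Installing | Committed | Aborted

type_synonym 't version = "'t option \<times> real"

record ('o, 't) st =
  now       :: real
  last      :: real                          (* global time of the last atomic action *)
  vers      :: "'o \<Rightarrow> 't version set"
  lck       :: "'o \<Rightarrow> 't option"
  pc        :: "'t \<Rightarrow> phase"
  tstart    :: "'t \<Rightarrow> real"                  (* global time T started *)
  slstart   :: "'t \<Rightarrow> real"                  (* global time current sleep (GET_TS) began *)
  sldur     :: "'t \<Rightarrow> real"                  (* sleep duration, in local time *)
  slU       :: "'t \<Rightarrow> real"                  (* U returned by TIME() in current GET_TS *)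
  rts       :: "'t \<Rightarrow> real"
  rtsat     :: "'t \<Rightarrow> real"                  (* global time the GET_TS for rts completed *)
  rd        :: "'t \<Rightarrow> 'o \<Rightarrow> 't version option"
  held      :: "'t \<Rightarrow> 'o set"
  wts       :: "'t \<Rightarrow> real"
  validated :: "'t \<Rightarrow> 'o set"

definition abort :: "('o,'t) st \<Rightarrow> 't \<Rightarrow> ('o,'t) st" where
  "abort s T = s(| pc := (pc s)(T := Aborted),
                   lck := (\<lambda>x. if x \<in> held s T then None else lck s x),
                   held := (held s)(T := {}) |)"

(* Atomic protocol actions of transaction T (parameters: drift bound eps,
   local clocks clk (local time of machine m at global time t), placement mach,
   read sets RS and write sets WS). *)
inductive act :: "real \<Rightarrow> ('m \<Rightarrow> real \<Rightarrow> real) \<Rightarrow> ('t \<Rightarrow> 'm) \<Rightarrow> ('t \<Rightarrow> 'o set) \<Rightarrow> ('t \<Rightarrow> 'o set)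
                   \<Rightarrow> ('o,'t) st \<Rightarrow> ('o,'t) st \<Rightarrow> bool"
  for eps clk mach RS WS where
  start: "\<lbrakk> pc s T = NotStarted; L \<le> now s; now s \<le> U \<rbrakk> \<Longrightarrow>
     act eps clk mach RS WS s (s(| pc := (pc s)(T := RtsWait), tstart := (tstart s)(T := now s),
        slstart := (slstart s)(T := now s), sldur := (sldur s)(T := (U - L) * (1 + eps)),
        slU := (slU s)(T := U) |))"
| wake_rts: "\<lbrakk> pc s T = RtsWait;
     clk (mach T) (now s) - clk (mach T) (slstart s T) \<ge> sldur s T \<rbrakk> \<Longrightarrow>
     act eps clk mach RS WS s (s(| pc := (pc s)(T := Reading), rts := (rts s)(T := slU s T),
        rtsat := (rtsat s)(T := now s) |))"
| read_ok: "\<lbrakk> pc s T = Reading; R \<in> RS T; rd s T R = None; lck s R = None;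
     v \<in> vers s R; snd v \<le> rts s T; \<forall>w\<in>vers s R. snd w \<le> rts s T \<longrightarrow> snd w \<le> snd v \<rbrakk> \<Longrightarrow>
     act eps clk mach RS WS s (s(| rd := (rd s)(T := (rd s T)(R := Some v)) |))"
| read_fail: "\<lbrakk> pc s T = Reading; R \<in> RS T; rd s T R = None;
     lck s R \<noteq> None \<or> (\<forall>w\<in>vers s R. rts s T < snd w) \<rbrakk> \<Longrightarrow>
     act eps clk mach RS WS s (abort s T)"
| reads_done: "\<lbrakk> pc s T = Reading; \<forall>R\<in>RS T. rd s T R \<noteq> None \<rbrakk> \<Longrightarrow>
     act eps clk mach RS WS s (s(| pc := (pc s)(T := (if WS T = {} then Committed else Locking)) |))"
| lock_ok: "\<lbrakk> pc s T = Locking; W \<in> WS T; W \<notin> held s T; lck s W = None;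
     \<forall>w\<in>vers s W. snd w < rts s T \<rbrakk> \<Longrightarrow>
     act eps clk mach RS WS s (s(| lck := (lck s)(W := Some T), held := (held s)(T := insert W (held s T)) |))"
| lock_fail: "\<lbrakk> pc s T = Locking; W \<in> WS T; W \<notin> held s T;
     lck s W \<noteq> None \<or> (\<exists>w\<in>vers s W. rts s T \<le> snd w) \<rbrakk> \<Longrightarrow>
     act eps clk mach RS WS s (abort s T)"
| locks_done: "\<lbrakk> pc s T = Locking; WS T \<subseteq> held s T; L \<le> now s; now s \<le> U \<rbrakk> \<Longrightarrow>
     act eps clk mach RS WS s (s(| pc := (pc s)(T := WtsWait),
        slstart := (slstart s)(T := now s), sldur := (sldur s)(T := (U - L) * (1 + eps)),
        slU := (slU s)(T := U) |))"
| wake_wts: "\<lbrakk> pc s T = WtsWait;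
     clk (mach T) (now s) - clk (mach T) (slstart s T) \<ge> sldur s T \<rbrakk> \<Longrightarrow>
     act eps clk mach RS WS s (s(| pc := (pc s)(T := Validating), wts := (wts s)(T := slU s T) |))"
| validate_ok: "\<lbrakk> pc s T = Validating; R \<in> RS T - WS T; lck s R = None;
     \<forall>w\<in>vers s R. snd w \<le> rts s T \<rbrakk> \<Longrightarrow>
     act eps clk mach RS WS s (s(| validated := (validated s)(T := insert R (validated s T)) |))"
| validate_fail: "\<lbrakk> pc s T = Validating; R \<in> RS T - WS T;
     lck s R \<noteq> None \<or> (\<exists>w\<in>vers s R. rts s T < snd w) \<rbrakk> \<Longrightarrow>
     act eps clk mach RS WS s (abort s T)"
| validated_done: "\<lbrakk> pc s T = Validating; RS T - WS T \<subseteq> validated s T \<rbrakk> \<Longrightarrow>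
     act eps clk mach RS WS s (s(| pc := (pc s)(T := Installing) |))"
| install: "\<lbrakk> pc s T = Installing; W \<in> held s T \<rbrakk> \<Longrightarrow>
     act eps clk mach RS WS s (s(| vers := (vers s)(W := insert (Some T, wts s T) (vers s W)),
        lck := (lck s)(W := None), held := (held s)(T := held s T - {W}) |))"
| install_done: "\<lbrakk> pc s T = Installing; held s T = {} \<rbrakk> \<Longrightarrow>
     act eps clk mach RS WS s (s(| pc := (pc s)(T := Committed) |))"

inductive step :: "real \<Rightarrow> ('m \<Rightarrow> real \<Rightarrow> real) \<Rightarrow> ('t \<Rightarrow> 'm) \<Rightarrow> ('t \<Rightarrow> 'o set) \<Rightarrow> ('t \<Rightarrow> 'o set)
                   \<Rightarrow> ('o,'t) st \<Rightarrow> ('o,'t) st \<Rightarrow> bool"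
  for eps clk mach RS WS where
  tick: "d > 0 \<Longrightarrow> step eps clk mach RS WS s (s(| now := now s + d |))"
| action: "\<lbrakk> last s < now s; act eps clk mach RS WS s s' \<rbrakk> \<Longrightarrow>
     step eps clk mach RS WS s (s'(| last := now s |))"

definition init :: "('o,'t) st \<Rightarrow> bool" where
  "init s \<longleftrightarrow> now s = 0 \<and> last s < now s \<and> (\<forall>R. vers s R = {(None, 0)}) \<and> (\<forall>R. lck s R = None)
     \<and> (\<forall>T. pc s T = NotStarted) \<and> (\<forall>T R. rd s T R = None) \<and> (\<forall>T. held s T = {})
     \<and> (\<forall>T. validated s T = {})"

end

theory Submission imports Defs begin

definition farm_inv :: "real \<Rightarrow> ('o,'t) st \<Rightarrow> bool" where "farm_inv eps s \<longleftrightarrow>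
 last s \<le> now s \<and>
 (\<forall>T. pc s T \<in> {NotStarted, RtsWait} \<longrightarrow> (\<forall>R. rd s T R = None)) \<and>
 (\<forall>T. pc s T = RtsWait \<longrightarrow> tstart s T = slstart s T \<and> slstart s T \<le> slU s T \<and> slstart s T \<le> last s \<and> (\<exists>L. L \<le> slstart s T \<and> sldur s T = (slU s T - L)*(1+eps))) \<and>
 (\<forall>T. pc s T \<notin> {NotStarted, RtsWait} \<longrightarrow> tstart s T \<le> rts s T \<and> rts s T \<le> rtsat s T \<and> rtsat s T \<le> last s) \<and>
 (\<forall>T. pc s T = WtsWait \<longrightarrow> slstart s T \<le> slU s T \<and> rts s T < slstart s T) \<and>
 (\<forall>T. pc s T \<in> {Validating, Installing} \<longrightarrow> rts s T < wts s T) \<and>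
 (\<forall>T W. W \<in> held s T \<longrightarrow> lck s W = Some T) \<and>
 (\<forall>T. held s T \<noteq> {} \<longrightarrow> pc s T \<in> {Locking, WtsWait, Validating, Installing}) \<and>
 (\<forall>T W. W \<in> held s T \<longrightarrow> (\<forall>w\<in>vers s W. snd w < rts s T)) \<and>
 (\<forall>R w1 w2. w1 \<in> vers s R \<longrightarrow> w2 \<in> vers s R \<longrightarrow> snd w1 = snd w2 \<longrightarrow> w1 = w2) \<and>
 (\<forall>T T' W. W \<in> held s T' \<longrightarrow> rd s T W \<noteq> None \<longrightarrow> (pc s T' = WtsWait \<longrightarrow> rts s T < slstart s T') \<and> (pc s T' \<in> {Validating, Installing} \<longrightarrow> rts s T < wts s T')) \<and>
 (\<forall>T R v. rd s T R = Some v \<longrightarrow> v \<in> vers s R \<and> snd v \<le> rts s T \<and> (\<forall>w\<in>vers s R. snd w \<le> rts s T \<longrightarrow> w = v \<or> snd w < snd v))"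

lemma init_inv: "init s \<Longrightarrow> farm_inv eps s"
  unfolding init_def farm_inv_def by auto

lemma clock:
  fixes eps :: real
  assumes eps: "0 \<le> eps"
    and drift: "\<forall>m t1 t2. t1 \<le> t2 \<longrightarrow>
                 (1 - eps) * (t2 - t1) \<le> clk m t2 - clk m t1 \<and> clk m t2 - clk m t1 \<le> (1 + eps) * (t2 - t1)"
    and "a \<le> b" "L \<le> a" "clk m b - clk m a \<ge> (U - L) * (1 + eps)"
  shows "U \<le> b"
proof -
  have "clk m b - clk m a \<le> (1 + eps) * (b - a)" using drift assms(3) by blast
  then have "(U - L) * (1 + eps) \<le> (b - a) * (1 + eps)" using assms(5) by (simp add: algebra_simps)
  then have "U - L \<le> b - a" using eps by (simp add: mult_le_cancel_right)
  then show ?thesis using assms by linarith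
qed

lemma act_inv:
  assumes "act eps clk mach RS WS s s'" "last s < now s" "farm_inv eps s" "0 \<le> eps"
    "\<forall>m t1 t2. t1 \<le> t2 \<longrightarrow>
                 (1 - eps) * (t2 - t1) \<le> clk m t2 - clk m t1 \<and> clk m t2 - clk m t1 \<le> (1 + eps) * (t2 - t1)"
  shows "farm_inv eps (s'\<lparr>last := now s\<rparr>)"
  using assms(1)
proof -
  have RA: "\<And>T. pc s T \<notin> {NotStarted,RtsWait} \<Longrightarrow> rtsat s T \<le> now s"
  proof -
    fix T assume a: "pc s T \<notin> {NotStarted,RtsWait}"
    have "\<forall>T. pc s T \<notin> {NotStarted, RtsWait} \<longrightarrow> tstart s T \<le> rts s T \<and> rts s T \<le> rtsat s T \<and> rtsat s T \<le> last s"
      using assms(3) unfolding farm_inv_def by (elim conjE) assumption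
    then have "rts s T \<le> rtsat s T \<and> rtsat s T \<le> last s" using a by blast
    then show "rtsat s T \<le> now s" using assms(2) by linarith
  qed
  have RC: "\<And>T. pc s T \<notin> {NotStarted,RtsWait} \<Longrightarrow> rts s T < now s"
  proof -
    fix T assume a: "pc s T \<notin> {NotStarted,RtsWait}"
    have "\<forall>T. pc s T \<notin> {NotStarted, RtsWait} \<longrightarrow> tstart s T \<le> rts s T \<and> rts s T \<le> rtsat s T \<and> rtsat s T \<le> last s"
      using assms(3) unfolding farm_inv_def by (elim conjE) assumption
    then have "rts s T \<le> rtsat s T \<and> rtsat s T \<le> last s" using a by blast
    then show "rts s T < now s" using assms(2) by linarith
  qed
  have RB: "\<And>T W v. rd s T W = Some v \<Longrightarrow> rts s T < now s"
  proof -
    fix T W v assume a: "rd s T W = Some v"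
    have h1: "\<forall>T. pc s T \<in> {NotStarted, RtsWait} \<longrightarrow> (\<forall>R. rd s T R = None)"
      using assms(3) unfolding farm_inv_def by (elim conjE) assumption
    have p: "pc s T \<notin> {NotStarted, RtsWait}"
    proof
      assume "pc s T \<in> {NotStarted, RtsWait}"
      then have "rd s T W = None" using h1 by blast
      then show False using a by simp
    qed
    have h2: "\<forall>T. pc s T \<notin> {NotStarted, RtsWait} \<longrightarrow> tstart s T \<le> rts s T \<and> rts s T \<le> rtsat s T \<and> rtsat s T \<le> last s"
      using assms(3) unfolding farm_inv_def by (elim conjE) assumption
    then have "rts s T \<le> rtsat s T \<and> rtsat s T \<le> last s" using p by blast
    then have "rts s T \<le> last s" by linarith
    then show "rts s T < now s" using assms(2) by linarith
  qed
  have HD: "\<And>T1 T2 W. W \<in> held s T1 \<Longrightarrow> W \<in> held s T2 \<Longrightarrow> T1 = T2"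
  proof -
    fix T1 T2 W assume a: "W \<in> held s T1" "W \<in> held s T2"
    have "\<forall>T W. W \<in> held s T \<longrightarrow> lck s W = Some T"
      using assms(3) unfolding farm_inv_def by (elim conjE) assumption
    then have "lck s W = Some T1" "lck s W = Some T2" using a by blast+
    then show "T1 = T2" by simp
  qed
  show ?thesis using assms(1)
proof cases
  case (start T L U)
  then show ?thesis using assms(2-) unfolding farm_inv_def by auto
next
  case (wake_rts T)
  have farm_inv: "farm_inv eps s" by fact
  then obtain L where L: "L \<le> slstart s T" "sldur s T = (slU s T - L)*(1+eps)" "slstart s T \<le> last s"
  proof -
    have "\<forall>T. pc s T = RtsWait \<longrightarrow> tstart s T = slstart s T \<and> slstart s T \<le> slU s T \<and> slstart s T \<le> last s \<and> (\<exists>L. L \<le> slstart s T \<and> sldur s T = (slU s T - L)*(1+eps))"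
      using farm_inv unfolding farm_inv_def by (elim conjE) assumption
    then show ?thesis using wake_rts that by blast
  qed
  have "slU s T \<le> now s"
    by (rule clock[OF assms(4) assms(5), of "slstart s T" "now s" L _ "mach T"])
       (use L wake_rts assms(2) in auto)
  then show ?thesis using wake_rts assms(2-) unfolding farm_inv_def by auto
next
  case (read_ok T R v)
  have r: "rtsat s T \<le> now s" using RA read_ok(2) by auto
  then show ?thesis using read_ok assms(2-) unfolding farm_inv_def by auto
next
  case (read_fail T R)
  have "rtsat s T \<le> last s" using read_fail(2) assms(3) unfolding farm_inv_def by auto
  then have "rtsat s T \<le> now s" using assms(2) by linarith
  then show ?thesis using read_fail HD assms(2-) unfolding farm_inv_def abort_def by auto
next
  case (reads_done T)
  have r: "rtsat s T \<le> now s" using RA reads_done(2) by auto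
  then show ?thesis using reads_done assms(2-) unfolding farm_inv_def by auto
next
  case (lock_ok T W)
  have r: "rtsat s T \<le> now s" using RA lock_ok(2) by auto
  then show ?thesis using lock_ok assms(2-) unfolding farm_inv_def by auto
next
  case (lock_fail T W)
  have r: "rtsat s T \<le> now s" using RA lock_fail(2) by auto
  then show ?thesis using lock_fail HD assms(2-) unfolding farm_inv_def abort_def by auto
next
  case (locks_done T L U)
  have r: "rtsat s T \<le> now s" "rts s T < now s" using RA RC locks_done(2) by auto
  then show ?thesis using locks_done RB assms(2-) unfolding farm_inv_def by auto
next
  case (wake_wts T)
  have r: "rtsat s T \<le> now s" using RA wake_wts(2) by auto
  have E: "\<forall>T T' W. W \<in> held s T' \<longrightarrow> rd s T W \<noteq> None \<longrightarrow> (pc s T' = WtsWait \<longrightarrow> rts s T < slstart s T') \<and> (pc s T' \<in> {Validating, Installing} \<longrightarrow> rts s T < wts s T')"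
    using assms(3) unfolding farm_inv_def by (elim conjE) assumption
  have WW: "\<forall>T. pc s T = WtsWait \<longrightarrow> slstart s T \<le> slU s T \<and> rts s T < slstart s T"
    using assms(3) unfolding farm_inv_def by (elim conjE) assumption
  have X: "\<And>Ta W v. W \<in> held s T \<Longrightarrow> rd s Ta W = Some v \<Longrightarrow> rts s Ta < slU s T"
  proof -
    fix Ta W v assume "W \<in> held s T" "rd s Ta W = Some v"
    then have "rts s Ta < slstart s T" using E wake_wts(2) by blast
    moreover have "slstart s T \<le> slU s T" using WW wake_wts(2) by blast
    ultimately show "rts s Ta < slU s T" by linarith
  qed
  show ?thesis using r X wake_wts assms(2-) unfolding farm_inv_def by auto
next
  case (validate_ok T R)
  have r: "rtsat s T \<le> now s" using RA validate_ok(2) by auto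
  then show ?thesis using validate_ok assms(2-) unfolding farm_inv_def by auto
next
  case (validate_fail T R)
  have r: "rtsat s T \<le> now s" using RA validate_fail(2) by auto
  then show ?thesis using validate_fail HD assms(2-) unfolding farm_inv_def abort_def by auto
next
  case (validated_done T)
  have r: "rtsat s T \<le> now s" using RA validated_done(2) by auto
  then show ?thesis using validated_done assms(2-) unfolding farm_inv_def by auto
next
  case (install T W)
  have r: "rtsat s T \<le> now s" using RA install(2) by auto
  have E: "\<forall>T T' W. W \<in> held s T' \<longrightarrow> rd s T W \<noteq> None \<longrightarrow> (pc s T' = WtsWait \<longrightarrow> rts s T < slstart s T') \<and> (pc s T' \<in> {Validating, Installing} \<longrightarrow> rts s T < wts s T')"
    using assms(3) unfolding farm_inv_def by (elim conjE) assumption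
  have H: "\<forall>T. pc s T \<in> {Validating, Installing} \<longrightarrow> rts s T < wts s T"
    using assms(3) unfolding farm_inv_def by (elim conjE) assumption
  have G: "\<forall>T W. W \<in> held s T \<longrightarrow> (\<forall>w\<in>vers s W. snd w < rts s T)"
    using assms(3) unfolding farm_inv_def by (elim conjE) assumption
  have X: "\<And>Ta. rd s Ta W \<noteq> None \<Longrightarrow> \<not> wts s T \<le> rts s Ta"
    using E install(2,3) by fastforce
  have Y: "\<And>w. w \<in> vers s W \<Longrightarrow> snd w < wts s T"
  proof -
    fix w assume "w \<in> vers s W"
    then have "snd w < rts s T" using G install(3) by blast
    moreover have "rts s T < wts s T" using H install(2) by blast
    ultimately show "snd w < wts s T" by linarith
  qed
  have Y2: "\<And>a. (a, wts s T) \<notin> vers s W" using Y by fastforce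
  have G2: "\<And>T W a b. W \<in> held s T \<Longrightarrow> (a,b) \<in> vers s W \<Longrightarrow> b < rts s T" using G by fastforce
  show ?thesis using r X Y Y2 HD G2 install assms(2-) unfolding farm_inv_def by auto
next
  case (install_done T)
  have r: "rtsat s T \<le> now s" using RA install_done(2) by auto
  then show ?thesis using install_done assms(2-) unfolding farm_inv_def by auto
qed
qed

theorem lemma4:
  fixes eps :: real and clk :: "'m \<Rightarrow> real \<Rightarrow> real" and mach :: "'t \<Rightarrow> 'm"
    and RS WS :: "'t \<Rightarrow> 'o set" and s0 s :: "('o,'t) st" and T :: 't
  assumes eps: "0 \<le> eps"
    and drift: "\<forall>m t1 t2. t1 \<le> t2 \<longrightarrow>
                 (1 - eps) * (t2 - t1) \<le> clk m t2 - clk m t1 \<and> clk m t2 - clk m t1 \<le> (1 + eps) * (t2 - t1)"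
    and fin: "\<forall>T. finite (RS T) \<and> finite (WS T)"
    and "init s0"
    and "(step eps clk mach RS WS)\<^sup>*\<^sup>* s0 s"
    and "pc s T \<notin> {NotStarted, RtsWait}"
  shows "tstart s T \<le> rts s T \<and> rts s T \<le> rtsat s T \<and>
         (\<forall>R v. rd s T R = Some v \<longrightarrow>
            v \<in> vers s R \<and> snd v \<le> rts s T \<and>
            (\<forall>w\<in>vers s R. snd w \<le> rts s T \<longrightarrow> w = v \<or> snd w < snd v))"
proof -
  have "farm_inv eps s" using assms(5)
  proof induction
    case base
    then show ?case using init_inv assms(4) by blast
  next
    case (step y z)
    from step.hyps(2) show ?case
    proof cases
      case (tick d)
      then show ?thesis using step.IH unfolding farm_inv_def by auto
    next
      case (action s')
      then show ?thesis using act_inv[OF _ _ step.IH eps drift] by blast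
    qed
  qed
  then have A: "\<forall>T. pc s T \<notin> {NotStarted, RtsWait} \<longrightarrow> tstart s T \<le> rts s T \<and> rts s T \<le> rtsat s T \<and> rtsat s T \<le> last s"
    unfolding farm_inv_def by (elim conjE) assumption
  have B: "\<forall>T R v. rd s T R = Some v \<longrightarrow> v \<in> vers s R \<and> snd v \<le> rts s T \<and> (\<forall>w\<in>vers s R. snd w \<le> rts s T \<longrightarrow> w = v \<or> snd w < snd v)"
    using \<open>farm_inv eps s\<close> unfolding farm_inv_def by (elim conjE) assumption
  show ?thesis using A B assms(6) by blast
qed

end
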